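(* Let $\mathbf{x}=(x_1,\ldots,x_d)^T\in\mathbb{R}^d$ be nonzero, $m<d$ a positive integer, $0<\alpha<1$, and $p_k=\alpha\frac{|x_k|}{\|\mathbf{x}\|_1}+(1-\alpha)\frac{x_k^2}{\|\mathbf{x}\|_2^2}$. Draw $t_1,\ldots,t_m\in[d]$ i.i.d. with $\mathbb{P}(t_j=k)=p_k$, and let $\mathbf{S}\in\mathbb{R}^{d\times m}$ have $j$-th column $\mathbf{e}_{t_j}/\sqrt{m p_{t_j}}$. Then $$\mathbb{E}[\mathbf{S}\mathbf{S}^T\mathbf{x}\mathbf{x}^T\mathbf{S}\mathbf{S}^T]=\sum_{k=1}^d\frac{x_k^2}{mp_k}\mathbf{e}_k\mathbf{e}_k^T+\frac{m-1}{m}\mathbf{x}\mathbf{x}^T,$$ $$\mathbb{E}[\mathbb{D}(\mathbf{S}\mathbf{S}^T\mathbf{x}\mathbf{x}^T\mathbf{S}\mathbf{S}^T)]=\sum_{k=1}^d\Big(\frac{1}{mp_k}+\frac{m-1}{m}\Big)x_k^2\mathbf{e}_k\mathbf{e}_k^T,$$ $$\mathbb{E}[(\mathbb{D}(\mathbf{S}\mathbf{S}^T\mathbf{x}\mathbf{x}^T\mathbf{S}\mathbf{S}^T))^2]=\sum_{k=1}^d\Big[\frac{1}{m^3p_k^3}+\frac{7(m-1)}{m^3p_k^2}+\frac{6(m^2-3m+2)}{m^3p_k}+\frac{m^3-6m^2+11m-6}{m^3}\Big]x_k^4\mathbf{e}_k\mathbf{e}_k^T,$$ $$\mathbb{E}[\mathbf{S}\mathbf{S}^T\mathbf{x}\mathbf{x}^T\mathbf{S}\mathbf{S}^T\,\mathbb{D}(\mathbf{S}\mathbf{S}^T\mathbf{x}\mathbf{x}^T\mathbf{S}\mathbf{S}^T)]=\big(\mathbb{E}[\mathbb{D}(\mathbf{S}\mathbf{S}^T\mathbf{x}\mathbf{x}^T\mathbf{S}\mathbf{S}^T)\,\mathbf{S}\mathbf{S}^T\mathbf{x}\mathbf{x}^T\mathbf{S}\mathbf{S}^T]\big)^T$$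 $$=\sum_{k=1}^d\Big[\frac{1}{m^3p_k^3}+\frac{6(m-1)}{m^3p_k^2}+\frac{3(m^2-3m+2)}{m^3p_k}\Big]x_k^4\mathbf{e}_k\mathbf{e}_k^T+\frac{m-1}{m^3}\mathbf{x}\mathbf{x}^T\mathbb{D}\big(\{\tfrac{x_k^2}{p_k^2}\}\big)+\frac{3(m^2-3m+2)}{m^3}\mathbf{x}\mathbf{x}^T\Big[\mathbb{D}\big(\{\tfrac{x_k^2}{p_k}\}\big)+\frac{m-3}{3}\mathbb{D}(\{x_k^2\})\Big],$$ and $$\mathbb{E}[(\mathbf{S}\mathbf{S}^T\mathbf{x}\mathbf{x}^T\mathbf{S}\mathbf{S}^T)^2]=\sum_{k=1}^d\Big[\frac{4(m-1)}{m^3p_k^2}+\frac{1}{m^3p_k^3}\Big]x_k^4\mathbf{e}_k\mathbf{e}_k^T+\sum_{k=1}^d\Big[\frac{\|\mathbf{x}\|_2^2(m^2-3m+2)}{m^3}+\frac{m-1}{m^3}\sum_{l=1}^d\frac{x_l^2}{p_l}\Big]\frac{x_k^2}{p_k}\mathbf{e}_k\mathbf{e}_k^T$$ $$+\Big[\frac{\|\mathbf{x}\|_2^2(m^3-6m^2+11m-6)}{m^3}+\frac{m^2-3m+2}{m^3}\sum_{l=1}^d\frac{x_l^2}{p_l}\Big]\mathbf{x}\mathbf{x}^T+\mathbf{x}\mathbf{x}^T\Big[\frac{2(m^2-3m+2)}{m^3}\mathbb{D}\big(\{\tfrac{x_k^2}{p_k}\}\big)+\frac{m-1}{m^3}\mathbb{D}\big(\{\tfrac{x_k^2}{p_k^2}\}\big)\Big]$$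 $$+\Big[\frac{2(m^2-3m+2)}{m^3}\mathbb{D}\big(\{\tfrac{x_k^2}{p_k}\}\big)+\frac{m-1}{m^3}\mathbb{D}\big(\{\tfrac{x_k^2}{p_k^2}\}\big)\Big]\mathbf{x}\mathbf{x}^T.$$
   Context: $\mathbf{e}_1,\ldots,\mathbf{e}_d$ denote the standard basis vectors of $\mathbb{R}^d$, $[d]=\{1,\ldots,d\}$. For a square matrix $\mathbf{A}$, $\mathbb{D}(\mathbf{A})$ is the diagonal matrix having the same main diagonal as $\mathbf{A}$. For scalars $c_1,\ldots,c_d$, $\mathbb{D}(\{c_k\})$ denotes the $d\times d$ diagonal matrix with $c_1,\ldots,c_d$ on its diagonal (e.g. $\mathbb{D}(\{x_k^2/p_k\})$). Indices $k$ with $x_k=0$ have $p_k=0$; for such $k$ every term containing a factor $x_k^a/p_k^b$ ($a\ge 2$) is interpreted as $0$. *)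

theory Defs
  imports "HOL-Probability.Probability"
begin

text \<open>l1 norm of a vector; the l2 norm is the library's norm on real^'d.\<close>
definition l1norm :: "real^'d \<Rightarrow> real" where
  "l1norm x = (\<Sum>k\<in>UNIV. \<bar>x $ k\<bar>)"

definition sprob :: "real \<Rightarrow> real^'d \<Rightarrow> 'd \<Rightarrow> real" where
  "sprob \<alpha> x k = \<alpha> * \<bar>x $ k\<bar> / l1norm x + (1 - \<alpha>) * (x $ k)^2 / (norm x)^2"

definition sample_pmf :: "real \<Rightarrow> real^'d \<Rightarrow> 'd pmf" where
  "sample_pmf \<alpha> x = embed_pmf (\<lambda>k. sprob \<alpha> x k)"

text \<open>m i.i.d. draws t_1..t_m, indexed by the finite type 'm with CARD('m) = m.\<close>
definition draws_pmf :: "real \<Rightarrow> real^'d \<Rightarrow> ('m::finite \<Rightarrow> 'd) pmf" where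
  "draws_pmf \<alpha> x = Pi_pmf UNIV undefined (\<lambda>_. sample_pmf \<alpha> x)"

definition sketch :: "real \<Rightarrow> real^'d \<Rightarrow> ('m::finite \<Rightarrow> 'd) \<Rightarrow> real^'m^'d" where
  "sketch \<alpha> x t = (\<chi> i j. if t j = i then 1 / sqrt (real CARD('m) * sprob \<alpha> x (t j)) else 0)"

definition outer :: "real^'n \<Rightarrow> real^'n \<Rightarrow> real^'n^'n" where
  "outer u v = (\<chi> i j. u $ i * v $ j)"

definition diagpart :: "real^'n^'n \<Rightarrow> real^'n^'n" where
  "diagpart A = (\<chi> i j. if i = j then A $ i $ j else 0)"

definition diagm :: "('n \<Rightarrow> real) \<Rightarrow> real^'n^'n" where
  "diagm c = (\<chi> i j. if i = j then c i else 0)"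

definition Mrand :: "real \<Rightarrow> real^'d \<Rightarrow> ('m::finite \<Rightarrow> 'd) \<Rightarrow> real^'d^'d" where
  "Mrand \<alpha> x t = (let S = sketch \<alpha> x t in
      S ** transpose S ** outer x x ** S ** transpose S)"

end

theory Submission
  imports Defs
begin


abbreviation Ex :: "'a pmf \<Rightarrow> ('a \<Rightarrow> real) \<Rightarrow> real" where "Ex M f \<equiv> measure_pmf.expectation M f"

lemma fin_exp: fixes M :: "'a::finite pmf" shows "Ex M f = (\<Sum>a\<in>UNIV. f a * pmf M a)"
  by (rule integral_measure_pmf_real) auto

lemma E_add: fixes M :: "'a::finite pmf" shows "Ex M (\<lambda>x. u x + v x) = Ex M u + Ex M v"
  by (simp add: fin_exp sum.distrib algebra_simps)
lemma E_cmult: "Ex M (\<lambda>x. c * u x) = c * Ex M u"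
  by simp
lemma E_cmult2: "Ex M (\<lambda>x. u x * c) = Ex M u * c"
  by simp
lemma E_const: "Ex M (\<lambda>x. c) = c"
  by (simp add: measure_pmf.prob_space)

lemma E_pair: fixes P :: "'a::finite pmf" and Q :: "'b::finite pmf"
  shows "Ex (pair_pmf P Q) g = Ex P (\<lambda>y. Ex Q (\<lambda>t. g (y,t)))"
proof -
  have "Ex (pair_pmf P Q) g = (\<Sum>z\<in>UNIV \<times> UNIV. g z * pmf (pair_pmf P Q) z)"
    by (simp add: fin_exp)
  also have "\<dots> = (\<Sum>y\<in>UNIV. \<Sum>t\<in>UNIV. g (y,t) * (pmf Q t * pmf P y))"
    by (subst sum.cartesian_product) (auto intro!: sum.cong simp: pmf_pair mult.commute)
  finally show ?thesis by (simp add: fin_exp sum_distrib_right mult.assoc)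
qed

lemma E_insert:
  fixes q :: "'b::finite pmf" and A :: "'a::finite set"
  assumes "a \<notin> A"
  shows "Ex (Pi_pmf (insert a A) d (\<lambda>_. q)) \<Phi> = Ex q (\<lambda>y. Ex (Pi_pmf A d (\<lambda>_. q)) (\<lambda>t. \<Phi> (t(a:=y))))"
  using assms by (simp add: Pi_pmf_insert E_pair case_prod_beta)

definition SS :: "'a set \<Rightarrow> ('b \<Rightarrow> real) \<Rightarrow> ('a \<Rightarrow> 'b) \<Rightarrow> real" where
  "SS A f t = (\<Sum>a\<in>A. f (t a))"

lemma SS_upd: "finite A \<Longrightarrow> a \<notin> A \<Longrightarrow> SS (insert a A) f (t(a:=y)) = f y + SS A f t"
  unfolding SS_def by (auto intro!: sum.cong)

lemma SS_empty[simp]: "SS {} f t = 0" by (simp add: SS_def)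

lemma expand2: "(a+w1)*(b+(w2::real)) = a*b + a*w2 + b*w1 + w1*w2" by algebra
lemma expand3: "(a+w1)*(b+w2)*(c+(w3::real)) = a*b*c + (a*b)*w3 + (a*c)*w2 + (b*c)*w1
   + a*(w2*w3) + b*(w1*w3) + c*(w1*w2) + w1*w2*w3" by algebra
lemma expand4: "(a+w1)*(b+w2)*(c+w3)*(d+(w4::real)) = a*b*c*d + (a*b*c)*w4 + (a*b*d)*w3 + (a*c*d)*w2 + (b*c*d)*w1
  + (a*b)*(w3*w4) + (a*c)*(w2*w4) + (a*d)*(w2*w3) + (b*c)*(w1*w4) + (b*d)*(w1*w3) + (c*d)*(w1*w2)
  + a*(w2*w3*w4) + b*(w1*w3*w4) + c*(w1*w2*w4) + d*(w1*w2*w3) + w1*w2*w3*w4" by algebra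

context
  fixes q :: "'b::finite pmf" and d :: 'b
begin

abbreviation "PP A \<equiv> Pi_pmf A d (\<lambda>_. q)"

lemma m1: fixes A :: "'a::finite set"
  shows "Ex (PP A) (SS A f1) = real (card A) * Ex q f1"
  using finite[of A]
proof (induction A rule: finite_induct)
  case empty then show ?case by (simp add: E_const)
next
  case (insert a A)
  have "Ex (PP (insert a A)) (SS (insert a A) f1) = Ex q (\<lambda>y. Ex (PP A) (\<lambda>t. f1 y + SS A f1 t))"
    using insert by (simp add: E_insert SS_upd)
  also have "\<dots> = real (card (insert a A)) * Ex q f1"
    using insert by (simp add: E_add E_const E_cmult E_cmult2 algebra_simps)
  finally show ?case .
qed

lemma m2: fixes A :: "'a::finite set"
  shows "Ex (PP A) (\<lambda>t. SS A f1 t * SS A f2 t) = real (card A) * Ex q (\<lambda>y. f1 y * f2 y)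
     + real (card A) * (real (card A) - 1) * (Ex q f1 * Ex q f2)"
  using finite[of A]
proof (induction A rule: finite_induct)
  case empty then show ?case by (simp add: E_const)
next
  case (insert a A)
  have "Ex (PP (insert a A)) (\<lambda>t. SS (insert a A) f1 t * SS (insert a A) f2 t)
     = Ex q (\<lambda>y. Ex (PP A) (\<lambda>t. (f1 y + SS A f1 t) * (f2 y + SS A f2 t)))"
    using insert by (simp add: E_insert SS_upd)
  also have "\<dots> = Ex q (\<lambda>y. f1 y * f2 y + f1 y * Ex (PP A) (SS A f2) + f2 y * Ex (PP A) (SS A f1)
       + Ex (PP A) (\<lambda>t. SS A f1 t * SS A f2 t))"
    by (simp only: expand2 E_add E_cmult E_cmult2 E_const)
  also have "\<dots> = real (card (insert a A)) * Ex q (\<lambda>y. f1 y * f2 y)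
     + real (card (insert a A)) * (real (card (insert a A)) - 1) * (Ex q f1 * Ex q f2)"
    using insert by (simp only: m1 E_add E_cmult E_cmult2 E_const) (simp add: algebra_simps)
  finally show ?case .
qed

lemma m3: fixes A :: "'a::finite set"
  shows "Ex (PP A) (\<lambda>t. SS A f1 t * SS A f2 t * SS A f3 t) = real (card A) * Ex q (\<lambda>y. f1 y * f2 y * f3 y)
     + real (card A) * (real (card A) - 1) * (Ex q (\<lambda>y. f1 y * f2 y) * Ex q f3
          + Ex q (\<lambda>y. f1 y * f3 y) * Ex q f2 + Ex q (\<lambda>y. f2 y * f3 y) * Ex q f1)
     + real (card A) * (real (card A) - 1) * (real (card A) - 2) * (Ex q f1 * Ex q f2 * Ex q f3)"
  using finite[of A]
proof (induction A rule: finite_induct)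
  case empty then show ?case by (simp add: E_const)
next
  case (insert a A)
  have "Ex (PP (insert a A)) (\<lambda>t. SS (insert a A) f1 t * SS (insert a A) f2 t * SS (insert a A) f3 t)
     = Ex q (\<lambda>y. Ex (PP A) (\<lambda>t. (f1 y + SS A f1 t) * (f2 y + SS A f2 t) * (f3 y + SS A f3 t)))"
    using insert by (simp add: E_insert SS_upd)
  also have "\<dots> = real (card (insert a A)) * Ex q (\<lambda>y. f1 y * f2 y * f3 y)
     + real (card (insert a A)) * (real (card (insert a A)) - 1) * (Ex q (\<lambda>y. f1 y * f2 y) * Ex q f3
          + Ex q (\<lambda>y. f1 y * f3 y) * Ex q f2 + Ex q (\<lambda>y. f2 y * f3 y) * Ex q f1)
     + real (card (insert a A)) * (real (card (insert a A)) - 1) * (real (card (insert a A)) - 2) * (Ex q f1 * Ex q f2 * Ex q f3)"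
    using insert by (simp only: expand3 m1 m2 E_add E_cmult E_cmult2 E_const) (simp add: algebra_simps)
  finally show ?case .
qed

lemma m4: fixes A :: "'a::finite set"
  shows "Ex (PP A) (\<lambda>t. SS A f1 t * SS A f2 t * SS A f3 t * SS A f4 t) =
       real (card A) * Ex q (\<lambda>y. f1 y * f2 y * f3 y * f4 y)
     + real (card A) * (real (card A) - 1) * (Ex q (\<lambda>y. f1 y * f2 y * f3 y) * Ex q f4
          + Ex q (\<lambda>y. f1 y * f2 y * f4 y) * Ex q f3 + Ex q (\<lambda>y. f1 y * f3 y * f4 y) * Ex q f2
          + Ex q (\<lambda>y. f2 y * f3 y * f4 y) * Ex q f1
          + Ex q (\<lambda>y. f1 y * f2 y) * Ex q (\<lambda>y. f3 y * f4 y)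
          + Ex q (\<lambda>y. f1 y * f3 y) * Ex q (\<lambda>y. f2 y * f4 y)
          + Ex q (\<lambda>y. f1 y * f4 y) * Ex q (\<lambda>y. f2 y * f3 y))
     + real (card A) * (real (card A) - 1) * (real (card A) - 2) * (
            Ex q (\<lambda>y. f1 y * f2 y) * Ex q f3 * Ex q f4
          + Ex q (\<lambda>y. f1 y * f3 y) * Ex q f2 * Ex q f4
          + Ex q (\<lambda>y. f1 y * f4 y) * Ex q f2 * Ex q f3
          + Ex q (\<lambda>y. f2 y * f3 y) * Ex q f1 * Ex q f4
          + Ex q (\<lambda>y. f2 y * f4 y) * Ex q f1 * Ex q f3
          + Ex q (\<lambda>y. f3 y * f4 y) * Ex q f1 * Ex q f2)
     + real (card A) * (real (card A) - 1) * (real (card A) - 2) * (real (card A) - 3)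
          * (Ex q f1 * Ex q f2 * Ex q f3 * Ex q f4)"
  (is "_ = ?R A")
  using finite[of A]
proof (induction A rule: finite_induct)
  case empty then show ?case by (simp add: E_const)
next
  case (insert a A)
  have "Ex (PP (insert a A)) (\<lambda>t. SS (insert a A) f1 t * SS (insert a A) f2 t * SS (insert a A) f3 t * SS (insert a A) f4 t)
     = Ex q (\<lambda>y. Ex (PP A) (\<lambda>t. (f1 y + SS A f1 t) * (f2 y + SS A f2 t) * (f3 y + SS A f3 t) * (f4 y + SS A f4 t)))"
    using insert by (simp add: E_insert SS_upd)
  also have "\<dots> = ?R (insert a A)"
    using insert by (simp only: expand4 m1 m2 m3 E_add E_cmult E_cmult2 E_const) (simp add: algebra_simps)
  finally show ?case .
qed

end



lemma l1norm_pos: "(x::real^'d) \<noteq> 0 \<Longrightarrow> l1norm x > 0"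
proof -
  assume "x \<noteq> 0"
  then obtain k where k: "x $ k \<noteq> 0" by (metis vec_eq_iff zero_index)
  have "\<bar>x $ k\<bar> \<le> l1norm x" unfolding l1norm_def
    by (rule member_le_sum) auto
  with k show ?thesis by linarith
qed

lemma sprob_nonneg: assumes "0 \<le> \<alpha>" "\<alpha> \<le> 1" shows "0 \<le> sprob \<alpha> x k"
  using assms unfolding sprob_def l1norm_def
  by (intro add_nonneg_nonneg divide_nonneg_nonneg mult_nonneg_nonneg) (auto intro: sum_nonneg)

lemma sprob_zero_iff: assumes "x \<noteq> 0" "0 < \<alpha>" "\<alpha> < 1"
  shows "sprob \<alpha> x k = 0 \<longleftrightarrow> x $ k = 0"
proof
  assume h: "sprob \<alpha> x k = 0"
  have l1: "l1norm x > 0" using l1norm_pos assms by blast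
  have "0 \<le> (1 - \<alpha>) * (x $ k)^2 / (norm x)^2" using assms by simp
  moreover have "\<alpha> * \<bar>x $ k\<bar> / l1norm x \<ge> 0" using assms l1 by simp
  ultimately have "\<alpha> * \<bar>x $ k\<bar> / l1norm x = 0" using h unfolding sprob_def by linarith
  then show "x $ k = 0" using assms l1 by simp
qed (simp add: sprob_def)

lemma sprob_sum: assumes "x \<noteq> 0" shows "(\<Sum>k\<in>UNIV. sprob \<alpha> x k) = 1"
proof -
  have l1: "l1norm x > 0" using l1norm_pos assms by blast
  have n: "(norm x)^2 = (\<Sum>k\<in>UNIV. (x $ k)^2)"
    by (simp only: power2_norm_eq_inner) (simp add: inner_vec_def power2_eq_square)
  have "norm x > 0" using assms by simp
  then have "(\<Sum>k\<in>UNIV. sprob \<alpha> x k) = \<alpha> * (\<Sum>k\<in>UNIV. \<bar>x $ k\<bar>) / l1norm x + (1 - \<alpha>) * (\<Sum>k\<in>UNIV. (x $ k)^2) / (norm x)^2"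
    unfolding sprob_def by (simp add: sum.distrib sum_divide_distrib sum_distrib_left)
  also have "\<dots> = 1" using l1 \<open>norm x > 0\<close> unfolding n[symmetric] by (simp add: l1norm_def)
  finally show ?thesis .
qed

lemma pmf_sample: assumes "x \<noteq> 0" "0 < \<alpha>" "\<alpha> < 1"
  shows "pmf (sample_pmf \<alpha> x) k = sprob \<alpha> x k"
  unfolding sample_pmf_def
proof (rule pmf_embed_pmf)
  show "\<And>k. 0 \<le> sprob \<alpha> x k" by (rule sprob_nonneg) (use assms in auto)
  then have "(\<Sum>a\<in>UNIV. ennreal (sprob \<alpha> x a)) = ennreal (\<Sum>a\<in>UNIV. sprob \<alpha> x a)"
    by (simp add: sum_ennreal)
  then show "(\<integral>\<^sup>+ k. ennreal (sprob \<alpha> x k) \<partial>count_space UNIV) = 1"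
    using sprob_sum[OF assms(1)] by (simp add: nn_integral_count_space_finite)
qed

lemma Evec: fixes M :: "'a::finite pmf" and F :: "'a \<Rightarrow> real^'n^'k"
  shows "(measure_pmf.expectation M F) $ i $ j = Ex M (\<lambda>t. F t $ i $ j)"
  by (subst integral_measure_pmf[where A=UNIV]) (auto simp: fin_exp mult.commute)




definition vv :: "real \<Rightarrow> ('d \<Rightarrow> real) \<Rightarrow> real^'d \<Rightarrow> 'd \<Rightarrow> 'd \<Rightarrow> real" where
  "vv m p x i s = (if s = i then x $ i / (m * p i) else 0)"

lemma sq_inv_sqrt: "0 \<le> (a::real) \<Longrightarrow> 1 / sqrt a * (1 / sqrt a) = 1 / a"
proof -
  assume "0 \<le> a"
  have "1 / sqrt a * (1 / sqrt a) = 1 / (sqrt a * sqrt a)" by simp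
  also have "sqrt a * sqrt a = a" using \<open>0 \<le> a\<close> by simp
  finally show ?thesis .
qed

lemma SS_vv: "SS A (vv m p x i) t = x $ i * SS A (\<lambda>s. if s = i then 1 / (m * p i) else 0) t"
  unfolding SS_def vv_def sum_distrib_left by (auto intro!: sum.cong)

lemma sum_delta_l: fixes i :: "'a::finite" shows "(\<Sum>l\<in>UNIV. (if i = l then a l else 0) * (b l::real)) = a i * b i"
proof -
  have "(\<Sum>l\<in>UNIV. (if i = l then a l else 0) * b l) = (\<Sum>l\<in>UNIV. if i = l then a l * b l else 0)" by (rule sum.cong) auto
  then show ?thesis by simp
qed
lemma sum_delta_r: fixes j :: "'a::finite" shows "(\<Sum>l\<in>UNIV. (b l::real) * (if l = j then a l else 0)) = b j * a j"
proof -
  have "(\<Sum>l\<in>UNIV. b l * (if l = j then a l else 0)) = (\<Sum>l\<in>UNIV. if l = j then b l * a l else 0)" by (rule sum.cong) auto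
  then show ?thesis by simp
qed

lemma Mentry:
  fixes x :: "real^'d" and t :: "'m::finite \<Rightarrow> 'd"
  assumes "0 \<le> \<alpha>" "\<alpha> \<le> 1"
  shows "Mrand \<alpha> x t $ i $ j = SS UNIV (vv (real CARD('m)) (sprob \<alpha> x) x i) t * SS UNIV (vv (real CARD('m)) (sprob \<alpha> x) x j) t"
proof -
  define S where "S = sketch \<alpha> x t"
  define m where "m = real CARD('m)"
  define p where "p = sprob \<alpha> x"
  define dd where "dd i = SS UNIV (\<lambda>s. if s = i then 1 / (m * p i) else 0) t" for i
  have pn: "0 \<le> m * p k" for k unfolding m_def p_def using sprob_nonneg[OF assms, of x k] by simp
  have P: "S ** transpose S = (\<chi> i k. if i = k then dd i else 0)"
    unfolding vec_eq_iff
  proof (intro allI)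
    fix i k
    show "(S ** transpose S) $ i $ k = (\<chi> i k. if i = k then dd i else 0) $ i $ k"
    proof (cases "i = k")
      case True
      then show ?thesis 
      unfolding matrix_matrix_mult_def transpose_def S_def sketch_def dd_def SS_def m_def[symmetric] p_def[symmetric]
        using pn by (simp, intro sum.cong) (auto simp: sq_inv_sqrt)
    next
      case False
      then show ?thesis
      unfolding matrix_matrix_mult_def transpose_def S_def sketch_def dd_def SS_def m_def[symmetric] p_def[symmetric]
        by (simp, intro sum.neutral) auto
    qed
  qed
  have "Mrand \<alpha> x t = (S ** transpose S ** outer x x) ** (S ** transpose S)"
    unfolding Mrand_def S_def Let_def by (simp add: matrix_mul_assoc)
  then have "Mrand \<alpha> x t $ i $ j = dd i * x $ i * x $ j * dd j"
    unfolding P by (simp add: matrix_matrix_mult_def outer_def sum_delta_l sum_delta_r)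
  then show ?thesis
    unfolding SS_vv dd_def m_def p_def by simp
qed




lemma diagpart_entry: "diagpart A $ i $ j = (if i = j then A $ i $ j else 0)"
  by (simp add: diagpart_def)
lemma dd_entry: "(diagpart A ** diagpart B) $ i $ j = (if i = j then A $ i $ i * B $ i $ i else 0)"
  by (simp add: matrix_matrix_mult_def diagpart_def if_distrib[of "\<lambda>z. z * _"] cong: if_cong)
lemma md_entry: "(A ** diagpart B) $ i $ j = A $ i $ j * B $ j $ j"
  unfolding matrix_matrix_mult_def diagpart_def using sum_delta_r[of "\<lambda>l. A $ i $ l" j "\<lambda>l. B $ l $ j"]
  by simp
lemma dm_entry: "(diagpart A ** B) $ i $ j = A $ i $ i * B $ i $ j"
  unfolding matrix_matrix_mult_def diagpart_def using sum_delta_l[of i "\<lambda>l. A $ i $ l" "\<lambda>l. B $ l $ j"]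
  by simp
lemma mm_entry: "(A ** B) $ i $ j = (\<Sum>l\<in>UNIV. A $ i $ l * B $ l $ j)"
  by (simp add: matrix_matrix_mult_def)
lemma od_entry: "(outer x x ** diagm c) $ i $ j = x $ i * x $ j * c j"
  unfolding matrix_matrix_mult_def diagm_def outer_def using sum_delta_r[of "\<lambda>l. x $ i * x $ l" j c]
  by simp
lemma do_entry: "(diagm c ** outer x x) $ i $ j = c i * x $ i * x $ j"
  unfolding matrix_matrix_mult_def diagm_def outer_def using sum_delta_l[of i "\<lambda>_. c i" "\<lambda>l. x $ l * x $ j"]
  by (simp add: mult.assoc)
lemma diagm_entry: "diagm c $ i $ j = (if i = j then c i else 0)"
  by (simp add: diagm_def)
lemma outer_entry: "outer u v $ i $ j = u $ i * v $ j"
  by (simp add: outer_def)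
lemma sumdiag_entry: fixes c :: "'n::finite \<Rightarrow> real"
  shows "(\<Sum>k\<in>UNIV. c k *\<^sub>R outer (axis k 1) (axis k 1)) $ i $ j = (if i = j then c i else 0)"
proof -
  have "(\<Sum>k\<in>UNIV. c k *\<^sub>R outer (axis k (1::real)) (axis k 1)) $ i $ j
      = (\<Sum>k\<in>UNIV. if k = i then (if i = j then c i else 0) else 0)"
    unfolding sum_component vector_scaleR_component by (rule sum.cong) (auto simp: outer_def axis_def)
  then show ?thesis by simp
qed

lemma E_sum: fixes M :: "'a::finite pmf"
  shows "Ex M (\<lambda>t. \<Sum>l\<in>L. F l t) = (\<Sum>l\<in>L. Ex M (F l))"
  unfolding fin_exp by (simp add: sum_distrib_right) (rule sum.swap)

lemma diagm_lin: "diagm c + s *\<^sub>R diagm c' = diagm (\<lambda>k. c k + s * c' k)"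
  by (simp add: vec_eq_iff diagm_def)
lemma diagm_lin2: "s' *\<^sub>R diagm c + s *\<^sub>R diagm c' = diagm (\<lambda>k. s' * c k + s * c' k)"
  by (simp add: vec_eq_iff diagm_def)

context
  fixes x :: "real^'d" and \<alpha> :: real and q :: "'d pmf" and m :: real
  assumes x0: "x \<noteq> 0" and a0: "0 < \<alpha>" and a1: "\<alpha> < 1"
    and qdef: "q = sample_pmf \<alpha> x"
begin

lemma pq: "pmf q k = sprob \<alpha> x k"
  unfolding qdef using pmf_sample x0 a0 a1 by blast

lemma Ex_q: "Ex q g = (\<Sum>s\<in>UNIV. g s * sprob \<alpha> x s)"
  by (simp add: fin_exp pq)

lemma Q1: "Ex q (vv m (sprob \<alpha> x) x i) = x $ i / m"
proof -
  have "Ex q (vv m (sprob \<alpha> x) x i) = (\<Sum>s\<in>UNIV. if s = i then x $ i / (m * sprob \<alpha> x i) * sprob \<alpha> x i else 0)"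
    unfolding Ex_q by (rule sum.cong) (auto simp: vv_def)
  also have "\<dots> = x $ i / m"
    using sprob_zero_iff[OF x0 a0 a1, of i] by (cases "sprob \<alpha> x i = 0") auto
  finally show ?thesis .
qed

lemma Q2: "Ex q (\<lambda>s. vv m (sprob \<alpha> x) x i s * vv m (sprob \<alpha> x) x j s)
   = (if i = j then (x $ i)^2 / (m^2 * sprob \<alpha> x i) else 0)"
proof -
  have "Ex q (\<lambda>s. vv m (sprob \<alpha> x) x i s * vv m (sprob \<alpha> x) x j s) = (\<Sum>s\<in>UNIV. if s = i then (if i = j then (x $ i / (m * sprob \<alpha> x i))^2 * sprob \<alpha> x i else 0) else 0)"
    unfolding Ex_q by (rule sum.cong) (auto simp: vv_def power2_eq_square)
  also have "\<dots> = (if i = j then (x $ i)^2 / (m^2 * sprob \<alpha> x i) else 0)"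
    by (cases "sprob \<alpha> x i = 0") (auto simp: power2_eq_square)
  finally show ?thesis .
qed

lemma Q3: "Ex q (\<lambda>s. vv m (sprob \<alpha> x) x i s * vv m (sprob \<alpha> x) x j s * vv m (sprob \<alpha> x) x k s)
   = (if i = j \<and> j = k then (x $ i)^3 / (m^3 * (sprob \<alpha> x i)^2) else 0)"
proof -
  have "Ex q (\<lambda>s. vv m (sprob \<alpha> x) x i s * vv m (sprob \<alpha> x) x j s * vv m (sprob \<alpha> x) x k s) = (\<Sum>s\<in>UNIV. if s = i then (if i = j \<and> j = k then (x $ i / (m * sprob \<alpha> x i))^3 * sprob \<alpha> x i else 0) else 0)"
    unfolding Ex_q by (rule sum.cong) (auto simp: vv_def power3_eq_cube)
  also have "\<dots> = (if i = j \<and> j = k then (x $ i)^3 / (m^3 * (sprob \<alpha> x i)^2) else 0)"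
    by (cases "sprob \<alpha> x i = 0") (auto simp: power3_eq_cube power2_eq_square mult_ac)
  finally show ?thesis .
qed

lemma Q4: "Ex q (\<lambda>s. vv m (sprob \<alpha> x) x i s * vv m (sprob \<alpha> x) x j s * vv m (sprob \<alpha> x) x k s * vv m (sprob \<alpha> x) x l s)
   = (if i = j \<and> j = k \<and> k = l then (x $ i)^4 / (m^4 * (sprob \<alpha> x i)^3) else 0)"
proof -
  have "Ex q (\<lambda>s. vv m (sprob \<alpha> x) x i s * vv m (sprob \<alpha> x) x j s * vv m (sprob \<alpha> x) x k s * vv m (sprob \<alpha> x) x l s) = (\<Sum>s\<in>UNIV. if s = i then (if i = j \<and> j = k \<and> k = l then (x $ i / (m * sprob \<alpha> x i))^4 * sprob \<alpha> x i else 0) else 0)"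
    unfolding Ex_q by (rule sum.cong) (auto simp: vv_def power4_eq_xxxx)
  also have "\<dots> = (if i = j \<and> j = k \<and> k = l then (x $ i)^4 / (m^4 * (sprob \<alpha> x i)^3) else 0)"
    by (cases "sprob \<alpha> x i = 0") (auto simp: power4_eq_xxxx power3_eq_cube mult_ac)
  finally show ?thesis .
qed

end



theorem lemma1:
  fixes x :: "real^'d" and \<alpha> :: real
  assumes "x \<noteq> 0"
    and "CARD('m::finite) < CARD('d)"
    and "0 < \<alpha>" and "\<alpha> < 1"
  defines "m \<equiv> real CARD('m)"
    and "p \<equiv> sprob \<alpha> x"
    and "E \<equiv> \<lambda>f. measure_pmf.expectation (draws_pmf \<alpha> x :: ('m \<Rightarrow> 'd) pmf) f"
    and "M \<equiv> (Mrand \<alpha> x :: ('m \<Rightarrow> 'd) \<Rightarrow> real^'d^'d)"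
    and "e \<equiv> \<lambda>k::'d. axis k (1::real)"
    and "ql \<equiv> (\<Sum>l\<in>UNIV. (x $ l)^2 / sprob \<alpha> x l)"
  shows
   "E (\<lambda>t. M t) =
      (\<Sum>k\<in>UNIV. ((x $ k)^2 / (m * p k)) *\<^sub>R outer (e k) (e k))
      + ((m - 1) / m) *\<^sub>R outer x x
  \<and> E (\<lambda>t. diagpart (M t)) =
      (\<Sum>k\<in>UNIV. ((1 / (m * p k) + (m - 1) / m) * (x $ k)^2) *\<^sub>R outer (e k) (e k))
  \<and> E (\<lambda>t. diagpart (M t) ** diagpart (M t)) =
      (\<Sum>k\<in>UNIV. ((1 / (m^3 * (p k)^3) + 7 * (m - 1) / (m^3 * (p k)^2)
          + 6 * (m^2 - 3*m + 2) / (m^3 * p k) + (m^3 - 6*m^2 + 11*m - 6) / m^3)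
          * (x $ k)^4) *\<^sub>R outer (e k) (e k))
  \<and> E (\<lambda>t. M t ** diagpart (M t)) = transpose (E (\<lambda>t. diagpart (M t) ** M t))
  \<and> E (\<lambda>t. M t ** diagpart (M t)) =
      (\<Sum>k\<in>UNIV. ((1 / (m^3 * (p k)^3) + 6 * (m - 1) / (m^3 * (p k)^2)
          + 3 * (m^2 - 3*m + 2) / (m^3 * p k)) * (x $ k)^4) *\<^sub>R outer (e k) (e k))
      + ((m - 1) / m^3) *\<^sub>R (outer x x ** diagm (\<lambda>k. (x $ k)^2 / (p k)^2))
      + (3 * (m^2 - 3*m + 2) / m^3) *\<^sub>R (outer x x **
          (diagm (\<lambda>k. (x $ k)^2 / p k) + ((m - 3) / 3) *\<^sub>R diagm (\<lambda>k. (x $ k)^2)))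
  \<and> E (\<lambda>t. M t ** M t) =
      (\<Sum>k\<in>UNIV. ((4 * (m - 1) / (m^3 * (p k)^2) + 1 / (m^3 * (p k)^3)) * (x $ k)^4)
          *\<^sub>R outer (e k) (e k))
      + (\<Sum>k\<in>UNIV. (((norm x)^2 * (m^2 - 3*m + 2) / m^3 + (m - 1) / m^3 * ql)
          * ((x $ k)^2 / p k)) *\<^sub>R outer (e k) (e k))
      + ((norm x)^2 * (m^3 - 6*m^2 + 11*m - 6) / m^3 + (m^2 - 3*m + 2) / m^3 * ql)
          *\<^sub>R outer x x
      + outer x x ** ((2 * (m^2 - 3*m + 2) / m^3) *\<^sub>R diagm (\<lambda>k. (x $ k)^2 / p k)
          + ((m - 1) / m^3) *\<^sub>R diagm (\<lambda>k. (x $ k)^2 / (p k)^2))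
      + ((2 * (m^2 - 3*m + 2) / m^3) *\<^sub>R diagm (\<lambda>k. (x $ k)^2 / p k)
          + ((m - 1) / m^3) *\<^sub>R diagm (\<lambda>k. (x $ k)^2 / (p k)^2)) ** outer x x"
proof -
  have a0': "0 \<le> \<alpha>" "\<alpha> \<le> 1" using assms by auto
  define q where "q = sample_pmf \<alpha> x"
  define D where "D = (draws_pmf \<alpha> x :: ('m \<Rightarrow> 'd) pmf)"
  define Y where "Y i (t::'m \<Rightarrow> 'd) = SS UNIV (vv m p x i) t" for i t
  define a where "a i = x $ i / m" for i
  define b where "b i = (x $ i)^2 / (m^2 * p i)" for i
  define c where "c i = (x $ i)^3 / (m^3 * (p i)^2)" for i
  define d where "d i = (x $ i)^4 / (m^4 * (p i)^3)" for i
  define Q2f where "Q2f i j = (if i = j then b i else 0)" for i j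
  define Q3f where "Q3f i j k = (if i = j \<and> j = k then c i else 0)" for i j k
  define Q4f where "Q4f i j k l = (if i = j \<and> j = k \<and> k = l then d i else 0)" for i j k l
  have mpos: "m > 0" unfolding m_def by simp
  then have hm: "m * inverse m = 1" by simp
  have mnz: "m \<noteq> 0" using mpos by simp
  define k3 where "k3 = inverse (3::real)"
  have h3: "3 * k3 = 1" by (simp add: k3_def)
  have pz: "p k = 0 \<Longrightarrow> x $ k = 0" for k
    unfolding p_def using sprob_zero_iff[OF assms(1) assms(3) assms(4)] by blast
  have Mij: "M t $ i $ j = Y i t * Y j t" for t i j
    unfolding M_def Y_def m_def p_def by (rule Mentry[OF a0'])
  have Dr: "D = Pi_pmf UNIV undefined (\<lambda>_. q)" by (simp add: D_def draws_pmf_def q_def)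
  have cm: "real (card (UNIV::'m set)) = m" by (simp add: m_def)
  have EE: "E F $ i $ j = Ex D (\<lambda>t. F t $ i $ j)" for F i j
    unfolding E_def D_def by (rule Evec)
  have Q1': "Ex q (vv m p x i) = a i" for i
    using Q1[OF assms(1) assms(3) assms(4) q_def] by (simp add: p_def a_def)
  have Q2': "Ex q (\<lambda>s. vv m p x i s * vv m p x j s) = Q2f i j" for i j
    using Q2[OF assms(1) assms(3) assms(4) q_def] by (simp add: p_def Q2f_def b_def)
  have Q3': "Ex q (\<lambda>s. vv m p x i s * vv m p x j s * vv m p x k s) = Q3f i j k" for i j k
    using Q3[OF assms(1) assms(3) assms(4) q_def] by (simp add: p_def Q3f_def c_def)
  have Q4': "Ex q (\<lambda>s. vv m p x i s * vv m p x j s * vv m p x k s * vv m p x l s) = Q4f i j k l" for i j k l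
    using Q4[OF assms(1) assms(3) assms(4) q_def] by (simp add: p_def Q4f_def d_def)
  have E2: "Ex D (\<lambda>t. Y i t * Y j t) = m * Q2f i j + m * (m - 1) * (a i * a j)" for i j
    unfolding Dr Y_def by (simp only: m2 cm Q1' Q2')
  have E4: "Ex D (\<lambda>t. Y i t * Y j t * Y k t * Y l t) =
       m * Q4f i j k l
     + m * (m - 1) * (Q3f i j k * a l + Q3f i j l * a k + Q3f i k l * a j + Q3f j k l * a i
          + Q2f i j * Q2f k l + Q2f i k * Q2f j l + Q2f i l * Q2f j k)
     + m * (m - 1) * (m - 2) * (Q2f i j * a k * a l + Q2f i k * a j * a l + Q2f i l * a j * a k
          + Q2f j k * a i * a l + Q2f j l * a i * a k + Q2f k l * a i * a j)
     + m * (m - 1) * (m - 2) * (m - 3) * (a i * a j * a k * a l)" for i j k l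
    unfolding Dr Y_def by (simp only: m4 cm Q1' Q2' Q3' Q4')
  have E4b: "Ex D (\<lambda>t. Y i t * Y j t * (Y k t * Y l t)) =
       m * Q4f i j k l
     + m * (m - 1) * (Q3f i j k * a l + Q3f i j l * a k + Q3f i k l * a j + Q3f j k l * a i
          + Q2f i j * Q2f k l + Q2f i k * Q2f j l + Q2f i l * Q2f j k)
     + m * (m - 1) * (m - 2) * (Q2f i j * a k * a l + Q2f i k * a j * a l + Q2f i l * a j * a k
          + Q2f j k * a i * a l + Q2f j l * a i * a k + Q2f k l * a i * a j)
     + m * (m - 1) * (m - 2) * (m - 3) * (a i * a j * a k * a l)" for i j k l
    using E4[of i j k l] by (simp add: mult.assoc)
  have C1: "E (\<lambda>t. M t) =
      (\<Sum>k\<in>UNIV. ((x $ k)^2 / (m * p k)) *\<^sub>R outer (e k) (e k))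
      + ((m - 1) / m) *\<^sub>R outer x x"
    unfolding vec_eq_iff
  proof (intro allI)
    fix i j
    show "E (\<lambda>t. M t) $ i $ j = ((\<Sum>k\<in>UNIV. ((x $ k)^2 / (m * p k)) *\<^sub>R outer (e k) (e k))
      + ((m - 1) / m) *\<^sub>R outer x x) $ i $ j"
      unfolding EE Mij E2 e_def using mpos
      by (simp only: vector_add_component sumdiag_entry vector_scaleR_component outer_entry)
         (simp add: Q2f_def a_def b_def power2_eq_square field_simps)
  qed
  have C2: "E (\<lambda>t. diagpart (M t)) =
      (\<Sum>k\<in>UNIV. ((1 / (m * p k) + (m - 1) / m) * (x $ k)^2) *\<^sub>R outer (e k) (e k))"
    unfolding vec_eq_iff
  proof (intro allI)
    fix i j
    show "E (\<lambda>t. diagpart (M t)) $ i $ j = (\<Sum>k\<in>UNIV. ((1 / (m * p k) + (m - 1) / m) * (x $ k)^2) *\<^sub>R outer (e k) (e k)) $ i $ j"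
    proof (cases "i = j")
      case True
      then show ?thesis unfolding EE diagpart_entry Mij e_def using mpos
        by (simp add: sumdiag_entry E2 Q2f_def a_def b_def power2_eq_square field_simps del: sum_component)
    next
      case False
      then show ?thesis unfolding EE diagpart_entry Mij e_def
        by (simp add: sumdiag_entry del: sum_component)
    qed
  qed
  have C3: "E (\<lambda>t. diagpart (M t) ** diagpart (M t)) =
      (\<Sum>k\<in>UNIV. ((1 / (m^3 * (p k)^3) + 7 * (m - 1) / (m^3 * (p k)^2)
          + 6 * (m^2 - 3*m + 2) / (m^3 * p k) + (m^3 - 6*m^2 + 11*m - 6) / m^3)
          * (x $ k)^4) *\<^sub>R outer (e k) (e k))"
    unfolding vec_eq_iff
  proof (intro allI)
    fix i j
    show "E (\<lambda>t. diagpart (M t) ** diagpart (M t)) $ i $ j = (\<Sum>k\<in>UNIV. ((1 / (m^3 * (p k)^3) + 7 * (m - 1) / (m^3 * (p k)^2)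
          + 6 * (m^2 - 3*m + 2) / (m^3 * p k) + (m^3 - 6*m^2 + 11*m - 6) / m^3)
          * (x $ k)^4) *\<^sub>R outer (e k) (e k)) $ i $ j"
    proof (cases "i = j")
      case True
      then have jj: "j = i" by simp
      show ?thesis
      proof (cases "p i = 0")
        case True
        with pz[OF True] show ?thesis unfolding EE dd_entry Mij e_def
          by (simp add: jj sumdiag_entry E4b Q2f_def Q3f_def Q4f_def a_def b_def c_def d_def del: sum_component)
      next
        case False
        then have h: "p i * inverse (p i) = 1" by simp
        show ?thesis unfolding EE dd_entry Mij e_def
          apply (simp add: jj mnz sumdiag_entry E4b Q2f_def Q3f_def Q4f_def a_def b_def c_def d_def del: sum_component)
          apply (simp only: divide_inverse inverse_mult_distrib power_inverse[symmetric] k3_def[symmetric])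
          using h hm h3 by algebra
      qed
    next
      case False
      then show ?thesis unfolding EE dd_entry Mij e_def
        by (simp add: sumdiag_entry del: sum_component)
    qed
  qed
  have C4: "E (\<lambda>t. M t ** diagpart (M t)) = transpose (E (\<lambda>t. diagpart (M t) ** M t))"
    unfolding vec_eq_iff
  proof (intro allI)
    fix i j
    show "E (\<lambda>t. M t ** diagpart (M t)) $ i $ j = transpose (E (\<lambda>t. diagpart (M t) ** M t)) $ i $ j"
      unfolding transpose_def by (simp add: EE md_entry dm_entry Mij mult_ac)
  qed
  have C5: "E (\<lambda>t. M t ** diagpart (M t)) =
      (\<Sum>k\<in>UNIV. ((1 / (m^3 * (p k)^3) + 6 * (m - 1) / (m^3 * (p k)^2)
          + 3 * (m^2 - 3*m + 2) / (m^3 * p k)) * (x $ k)^4) *\<^sub>R outer (e k) (e k))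
      + ((m - 1) / m^3) *\<^sub>R (outer x x ** diagm (\<lambda>k. (x $ k)^2 / (p k)^2))
      + (3 * (m^2 - 3*m + 2) / m^3) *\<^sub>R (outer x x **
          (diagm (\<lambda>k. (x $ k)^2 / p k) + ((m - 3) / 3) *\<^sub>R diagm (\<lambda>k. (x $ k)^2)))"
    (is "_ = ?R")
    unfolding vec_eq_iff
  proof (intro allI)
    have L: "E (\<lambda>t. M t ** diagpart (M t)) $ i $ j = Ex D (\<lambda>t. Y i t * Y j t * (Y j t * Y j t))" for i j
      by (simp add: EE md_entry Mij)
    fix i j
    show "E (\<lambda>t. M t ** diagpart (M t)) $ i $ j = ?R $ i $ j"
    proof (cases "i = j")
      case True
      then have jj: "j = i" by simp
      show ?thesis
      proof (cases "p i = 0")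
        case True
        with pz[OF True] show ?thesis
          by (simp add: L E4b e_def jj sumdiag_entry od_entry diagm_lin Q2f_def Q3f_def Q4f_def a_def b_def c_def d_def del: sum_component)
      next
        case False
        then have h: "p i * inverse (p i) = 1" by simp
        show ?thesis
          apply (simp add: L E4b e_def jj mnz sumdiag_entry od_entry diagm_lin Q2f_def Q3f_def Q4f_def a_def b_def c_def d_def del: sum_component)
          apply (simp only: divide_inverse inverse_mult_distrib power_inverse[symmetric] k3_def[symmetric])
          using h hm h3 by algebra
      qed
    next
      case False
      then have ij: "i \<noteq> j" "j \<noteq> i" by auto
      show ?thesis
      proof (cases "p j = 0")
        case True
        with pz[OF True] ij show ?thesis
          by (simp add: L E4b e_def sumdiag_entry od_entry diagm_lin Q2f_def Q3f_def Q4f_def a_def b_def c_def d_def del: sum_component)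
      next
        case False
        then have h: "p j * inverse (p j) = 1" by simp
        show ?thesis
          apply (simp add: L E4b e_def ij mnz sumdiag_entry od_entry diagm_lin Q2f_def Q3f_def Q4f_def a_def b_def c_def d_def del: sum_component)
          apply (simp only: divide_inverse inverse_mult_distrib power_inverse[symmetric] k3_def[symmetric])
          using h hm h3 by algebra
      qed
    qed
  qed
  define K1 where "K1 i j = m * (m - 1) * (m - 2) * Q2f i j + m * (m - 1) * (m - 2) * (m - 3) * (a i * a j)" for i j
  define K2 where "K2 i j = m * (m - 1) * Q2f i j + m * (m - 1) * (m - 2) * (a i * a j)" for i j
  define H1 where "H1 i j = m * (m - 1) * (Q3f i i i * a j) + 2 * m * (m - 1) * (m - 2) * (Q2f i i * a i * a j)" for i j
  define H3 where "H3 i = m * Q4f i i i i + 2 * m * (m - 1) * (Q3f i i i * a i) + 2 * m * (m - 1) * (Q2f i i * Q2f i i)" for i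
  have L6: "E (\<lambda>t. M t ** M t) $ i $ j = (\<Sum>l\<in>UNIV. Ex D (\<lambda>t. Y i t * Y l t * (Y l t * Y j t)))" for i j
    by (simp add: EE mm_entry Mij E_sum)
  have F6: "Ex D (\<lambda>t. Y i t * Y l t * (Y l t * Y j t)) = K1 i j * (a l * a l) + K2 i j * Q2f l l
      + (if l = i then H1 i j else 0) + (if l = j then H1 j i else 0)
      + (if l = i then (if i = j then H3 i else 0) else 0)" for i j l
    unfolding E4b K1_def K2_def H1_def H3_def
    by (cases "l = i"; cases "l = j"; cases "i = j"; simp add: Q2f_def Q3f_def Q4f_def; simp add: algebra_simps)
  have nrm: "(norm x)^2 = (\<Sum>l\<in>UNIV. x $ l * x $ l)"
    by (simp only: power2_norm_eq_inner) (simp add: inner_vec_def)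
  have S1: "(\<Sum>l\<in>UNIV. K * (a l * a l)) = K * ((norm x)^2 / m^2)" for K
    unfolding nrm a_def by (simp add: sum_distrib_left[symmetric] sum_divide_distrib[symmetric] power2_eq_square)
  have S2: "(\<Sum>l\<in>UNIV. K * Q2f l l) = K * (ql / m^2)" for K
  proof -
    have "(\<Sum>l\<in>UNIV. K * Q2f l l) = K * (\<Sum>l\<in>UNIV. ((x $ l)^2 / sprob \<alpha> x l) / m^2)"
      unfolding sum_distrib_left by (rule sum.cong) (auto simp: Q2f_def b_def p_def mult.commute)
    also have "\<dots> = K * (ql / m^2)" unfolding ql_def by (simp only: sum_divide_distrib[symmetric])
    finally show ?thesis .
  qed
  have L6': "E (\<lambda>t. M t ** M t) $ i $ j = K1 i j * ((norm x)^2 / m^2) + K2 i j * (ql / m^2)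
      + H1 i j + H1 j i + (if i = j then H3 i else 0)" for i j
    unfolding L6 F6 sum.distrib S1 S2 by simp
  have alt: "x $ k = 0 \<or> (p k \<noteq> 0 \<and> p k * inverse (p k) = 1)" for k
    using pz by (cases "p k = 0") auto
  have C6: "E (\<lambda>t. M t ** M t) =
      (\<Sum>k\<in>UNIV. ((4 * (m - 1) / (m^3 * (p k)^2) + 1 / (m^3 * (p k)^3)) * (x $ k)^4)
          *\<^sub>R outer (e k) (e k))
      + (\<Sum>k\<in>UNIV. (((norm x)^2 * (m^2 - 3*m + 2) / m^3 + (m - 1) / m^3 * ql)
          * ((x $ k)^2 / p k)) *\<^sub>R outer (e k) (e k))
      + ((norm x)^2 * (m^3 - 6*m^2 + 11*m - 6) / m^3 + (m^2 - 3*m + 2) / m^3 * ql)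
          *\<^sub>R outer x x
      + outer x x ** ((2 * (m^2 - 3*m + 2) / m^3) *\<^sub>R diagm (\<lambda>k. (x $ k)^2 / p k)
          + ((m - 1) / m^3) *\<^sub>R diagm (\<lambda>k. (x $ k)^2 / (p k)^2))
      + ((2 * (m^2 - 3*m + 2) / m^3) *\<^sub>R diagm (\<lambda>k. (x $ k)^2 / p k)
          + ((m - 1) / m^3) *\<^sub>R diagm (\<lambda>k. (x $ k)^2 / (p k)^2)) ** outer x x"
    (is "_ = ?R")
    unfolding vec_eq_iff
  proof (intro allI)
    fix i j
    show "E (\<lambda>t. M t ** M t) $ i $ j = ?R $ i $ j"
    proof (cases "i = j")
      case True
      then have jj: "j = i" by simp
      from alt[of i] show ?thesis
      proof
        assume x0: "x $ i = 0"
        then show ?thesis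
          apply (simp add: L6' e_def jj sumdiag_entry outer_entry od_entry do_entry diagm_lin2 K1_def K2_def H1_def H3_def
             Q2f_def Q3f_def Q4f_def a_def b_def c_def d_def del: sum_component)
          done
      next
        assume h: "p i \<noteq> 0 \<and> p i * inverse (p i) = 1"
        then show ?thesis
          apply (simp add: L6' e_def jj mnz sumdiag_entry outer_entry od_entry do_entry diagm_lin2 K1_def K2_def H1_def H3_def
             Q2f_def Q3f_def Q4f_def a_def b_def c_def d_def del: sum_component)
          apply (simp only: divide_inverse inverse_mult_distrib power_inverse[symmetric])
          using h hm by algebra
      qed
    next
      case False
      then have ij: "i \<noteq> j" "j \<noteq> i" by auto
      from alt[of i] show ?thesis
      proof
        assume xi: "x $ i = 0"
        from alt[of j] show ?thesis
        proof
          assume xj: "x $ j = 0"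
          show ?thesis using xi xj by (simp add: L6' e_def ij mnz sumdiag_entry outer_entry od_entry do_entry diagm_lin2 K1_def K2_def H1_def H3_def
             Q2f_def Q3f_def Q4f_def a_def b_def c_def d_def del: sum_component)
        next
          assume hj: "p j \<noteq> 0 \<and> p j * inverse (p j) = 1"
          show ?thesis using xi hj by (simp add: L6' e_def ij mnz sumdiag_entry outer_entry od_entry do_entry diagm_lin2 K1_def K2_def H1_def H3_def
             Q2f_def Q3f_def Q4f_def a_def b_def c_def d_def del: sum_component)
        qed
      next
        assume hi: "p i \<noteq> 0 \<and> p i * inverse (p i) = 1"
        from alt[of j] show ?thesis
        proof
          assume xj: "x $ j = 0"
          show ?thesis using xj hi by (simp add: L6' e_def ij mnz sumdiag_entry outer_entry od_entry do_entry diagm_lin2 K1_def K2_def H1_def H3_def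
             Q2f_def Q3f_def Q4f_def a_def b_def c_def d_def del: sum_component)
        next
          assume hj: "p j \<noteq> 0 \<and> p j * inverse (p j) = 1"
          show ?thesis apply (simp add: L6' e_def ij mnz sumdiag_entry outer_entry od_entry do_entry diagm_lin2 K1_def K2_def H1_def H3_def
             Q2f_def Q3f_def Q4f_def a_def b_def c_def d_def del: sum_component) apply (simp only: divide_inverse inverse_mult_distrib power_inverse[symmetric]) by (simp add: algebra_simps power2_eq_square power3_eq_cube)
        qed
      qed
    qed
  qed
  show ?thesis using C1 C2 C3 C4 C5 C6 by blast
qed


end
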